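(* Let $(A,\rhd,\lhd,\succ,\prec)$ be a finite-dimensional pre-dual pre-Poisson algebra with sub-adjacent dual pre-Poisson algebra $(A,\circ,[\cdot,\cdot])$, where $x\circ y=x\rhd y+x\lhd y$ and $[x,y]=x\succ y+x\prec y$. Let $\{e_1,\dots,e_n\}$ be a basis of $A$ and $\{e_1^*,\dots,e_n^*\}$ its dual basis. Let $\hat A=A\oplus A^*$ with operations $$(x+a^* )\circ(y+b^* )=x\circ y-L_{\rhd}^*(x)b^*+(-L_{\rhd}^*+R_{\lhd}^* )(y)a^*,$$ $$[x+a^*,y+b^*]=[x,y]+L_{\succ}^*(x)b^*-(L_{\succ}^*+R_{\prec}^* )(y)a^*,$$ for $x,y\in A$, $a^*,b^*\in A^*$ (this is a dual pre-Poisson algebra). Then $r=\sum_{i=1}^n(e_i\otimes e_i^*+e_i^*\otimes e_i)$ is a symmetric solution of the permutative-Leibniz Yang–Baxter equation in $\hat A$.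
   Context: Field $\mathbb{F}$ of characteristic $0$. For a bilinear operation $\diamond$, $L_\diamond(x)y=x\diamond y$, $R_\diamond(x)y=y\diamond x$; for $f:A\to\mathrm{End}(V)$ the dual $f^*:A\to\mathrm{End}(V^* )$ is $\langle f^*(x)v^*,u\rangle=-\langle v^*,f(x)u\rangle$. A pre-dual pre-Poisson algebra is a vector space $A$ with bilinear operations $\rhd,\lhd,\succ,\prec$ such that for all $x,y,z$: $x\lhd(y\lhd z+y\rhd z)=(x\lhd y)\lhd z=(y\rhd x)\lhd z=y\rhd(x\lhd z)$; $x\rhd(y\rhd z)=(x\lhd y+x\rhd y)\rhd z=(y\lhd x+y\rhd x)\rhd z$; $(x\prec y+x\succ y)\succ z=x\succ(y\succ z)-y\succ(x\succ z)$; $(x\succ y)\prec z=-(y\prec x)\prec z$; $x\prec(y\prec z+y\succ z)=(x\prec y)\prec z+y\succ(x\prec z)$; $x\prec(y\rhd z+y\lhd z)=(x\prec y)\lhd z+y\rhd(x\prec z)$; $x\succ(y\lhd z)=(x\succ y)\lhd z+y\lhd(x\succ z+x\prec z)$; $x\succ(y\rhd z)=(x\succ y+x\prec y)\rhd z+y\rhd(x\succ z)$; $(x\lhd y)\prec z=x\lhd(y\succ z+y\prec z)+y\rhd(x\prec z)$; $(x\rhd y+x\lhd y)\succ z=x\rhd(y\succ z)+y\rhd(x\succ z)$; $(x\rhd y-y\lhd x)\prec z=0$; $(x\succ y+y\prec x)\lhd z=0$; $(x\succ y+x\prec y+y\succ x+y\prec x)\rhd z=0$. A dual pre-Poisson algebra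 $(B,\circ,[\cdot,\cdot])$: $x\circ(y\circ z)=(x\circ y)\circ z=(y\circ x)\circ z$; $[x,[y,z]]=[[x,y],z]+[y,[x,z]]$; $[x,y\circ z]=[x,y]\circ z+y\circ[x,z]$; $[x\circ y,z]=x\circ[y,z]+y\circ[x,z]$; $[x,y]\circ z=-[y,x]\circ z$. PLYBE in a dual pre-Poisson algebra $B$: with $x\blacksquare y=x\circ y-y\circ x$, $x\square y=[x,y]+[y,x]$ and $r=\sum_i a_i\otimes b_i\in B\otimes B$, set $\mathbf{P}(r)=\sum_{i,j}\big(a_i\otimes a_j\otimes b_i\circ b_j-a_i\otimes b_i\circ a_j\otimes b_j+a_i\blacksquare a_j\otimes b_j\otimes b_i\big)$ and $\mathbf{L}(r)=\sum_{i,j}\big(a_i\otimes a_j\otimes[b_i,b_j]+a_i\otimes[b_i,a_j]\otimes b_j-a_i\square a_j\otimes b_i\otimes b_j\big)$; $r$ is a solution if $\mathbf{P}(r)=\mathbf{L}(r)=0$. Symmetric means invariant under the flip $u\otimes v\mapsto v\otimes u$. *)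

theory Defs
  imports Main "HOL-Library.Function_Algebras"
begin

text \<open>The finite-dimensional space A is 'n => 'k with 'n a finite
  index type ('k a field of characteristic 0). Its dual A* is also modelled as 'n => 'k,
  via the pairing below.\<close>

definition smul :: "'k::field \<Rightarrow> ('m \<Rightarrow> 'k) \<Rightarrow> ('m \<Rightarrow> 'k)" where
  "smul c x = (\<lambda>i. c * x i)"

definition pairing :: "('n::finite \<Rightarrow> 'k::field) \<Rightarrow> ('n \<Rightarrow> 'k) \<Rightarrow> 'k" where
  "pairing a u = (\<Sum>i\<in>UNIV. a i * u i)"

definition unitv :: "'n \<Rightarrow> 'n \<Rightarrow> 'k::field" where
  "unitv j = (\<lambda>i. if i = j then 1 else 0)"

text \<open>Dual of a linear map phi on A, acting on A*:
  pairing (dual_map phi a) u = - pairing a (phi u).\<close>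
definition dual_map :: "(('n::finite \<Rightarrow> 'k::field) \<Rightarrow> ('n \<Rightarrow> 'k)) \<Rightarrow> ('n \<Rightarrow> 'k) \<Rightarrow> ('n \<Rightarrow> 'k)" where
  "dual_map phi a = (\<lambda>j. - pairing a (phi (unitv j)))"

definition bilinear_op :: "(('m \<Rightarrow> 'k::field) \<Rightarrow> ('m \<Rightarrow> 'k) \<Rightarrow> ('m \<Rightarrow> 'k)) \<Rightarrow> bool" where
  "bilinear_op f \<longleftrightarrow>
     (\<forall>x y z. f (x + y) z = f x z + f y z) \<and>
     (\<forall>x y z. f x (y + z) = f x y + f x z) \<and>
     (\<forall>c x y. f (smul c x) y = smul c (f x y)) \<and>
     (\<forall>c x y. f x (smul c y) = smul c (f x y))"

definition is_basis :: "('n::finite \<Rightarrow> ('n \<Rightarrow> 'k::field)) \<Rightarrow> bool" where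
  "is_basis e \<longleftrightarrow> (\<forall>v. \<exists>!c. v = (\<Sum>i\<in>UNIV. smul (c i) (e i)))"

definition pre_dual_pre_Poisson ::
  "(('n \<Rightarrow> 'k::field) \<Rightarrow> ('n \<Rightarrow> 'k) \<Rightarrow> ('n \<Rightarrow> 'k)) \<Rightarrow>
   (('n \<Rightarrow> 'k) \<Rightarrow> ('n \<Rightarrow> 'k) \<Rightarrow> ('n \<Rightarrow> 'k)) \<Rightarrow>
   (('n \<Rightarrow> 'k) \<Rightarrow> ('n \<Rightarrow> 'k) \<Rightarrow> ('n \<Rightarrow> 'k)) \<Rightarrow>
   (('n \<Rightarrow> 'k) \<Rightarrow> ('n \<Rightarrow> 'k) \<Rightarrow> ('n \<Rightarrow> 'k)) \<Rightarrow> bool" where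
  "pre_dual_pre_Poisson rhd lhd succ prec \<longleftrightarrow>
    bilinear_op rhd \<and> bilinear_op lhd \<and> bilinear_op succ \<and> bilinear_op prec \<and>
    (\<forall>x y z.
      lhd x (lhd y z + rhd y z) = lhd (lhd x y) z \<and>
      lhd (lhd x y) z = lhd (rhd y x) z \<and>
      lhd (rhd y x) z = rhd y (lhd x z) \<and>
      rhd x (rhd y z) = rhd (lhd x y + rhd x y) z \<and>
      rhd (lhd x y + rhd x y) z = rhd (lhd y x + rhd y x) z \<and>
      succ (prec x y + succ x y) z = succ x (succ y z) - succ y (succ x z) \<and>
      prec (succ x y) z = - prec (prec y x) z \<and>
      prec x (prec y z + succ y z) = prec (prec x y) z + succ y (prec x z) \<and>
      prec x (rhd y z + lhd y z) = lhd (prec x y) z + rhd y (prec x z) \<and>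
      succ x (lhd y z) = lhd (succ x y) z + lhd y (succ x z + prec x z) \<and>
      succ x (rhd y z) = rhd (succ x y + prec x y) z + rhd y (succ x z) \<and>
      prec (lhd x y) z = lhd x (succ y z + prec y z) + rhd y (prec x z) \<and>
      succ (rhd x y + lhd x y) z = rhd x (succ y z) + rhd y (succ x z) \<and>
      prec (rhd x y - lhd y x) z = 0 \<and>
      lhd (succ x y + prec y x) z = 0 \<and>
      rhd (succ x y + prec x y + succ y x + prec y x) z = 0)"

text \<open>The double space A (+) A* modelled as ('n + 'n) => 'k (Inl: A-part, Inr: A*-part).\<close>
definition inA :: "('n \<Rightarrow> 'k::field) \<Rightarrow> ('n + 'n \<Rightarrow> 'k)" where
  "inA x = (\<lambda>p. case p of Inl i \<Rightarrow> x i | Inr _ \<Rightarrow> 0)"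
definition inD :: "('n \<Rightarrow> 'k::field) \<Rightarrow> ('n + 'n \<Rightarrow> 'k)" where
  "inD a = (\<lambda>p. case p of Inl _ \<Rightarrow> 0 | Inr i \<Rightarrow> a i)"
definition prA :: "('n + 'n \<Rightarrow> 'k) \<Rightarrow> ('n \<Rightarrow> 'k)" where
  "prA v = (\<lambda>i. v (Inl i))"
definition prD :: "('n + 'n \<Rightarrow> 'k) \<Rightarrow> ('n \<Rightarrow> 'k)" where
  "prD v = (\<lambda>i. v (Inr i))"

definition hat_circ ::
  "(('n::finite \<Rightarrow> 'k::field) \<Rightarrow> ('n \<Rightarrow> 'k) \<Rightarrow> ('n \<Rightarrow> 'k)) \<Rightarrow>
   (('n \<Rightarrow> 'k) \<Rightarrow> ('n \<Rightarrow> 'k) \<Rightarrow> ('n \<Rightarrow> 'k)) \<Rightarrow>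
   ('n + 'n \<Rightarrow> 'k) \<Rightarrow> ('n + 'n \<Rightarrow> 'k) \<Rightarrow> ('n + 'n \<Rightarrow> 'k)" where
  "hat_circ rhd lhd v w =
    (let x = prA v; a = prD v; y = prA w; b = prD w in
      inA (rhd x y + lhd x y) +
      inD (- dual_map (rhd x) b - dual_map (rhd y) a + dual_map (\<lambda>z. lhd z y) a))"

definition hat_br ::
  "(('n::finite \<Rightarrow> 'k::field) \<Rightarrow> ('n \<Rightarrow> 'k) \<Rightarrow> ('n \<Rightarrow> 'k)) \<Rightarrow>
   (('n \<Rightarrow> 'k) \<Rightarrow> ('n \<Rightarrow> 'k) \<Rightarrow> ('n \<Rightarrow> 'k)) \<Rightarrow>
   ('n + 'n \<Rightarrow> 'k) \<Rightarrow> ('n + 'n \<Rightarrow> 'k) \<Rightarrow> ('n + 'n \<Rightarrow> 'k)" where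
  "hat_br succ prec v w =
    (let x = prA v; a = prD v; y = prA w; b = prD w in
      inA (succ x y + prec x y) +
      inD (dual_map (succ x) b - dual_map (succ y) a - dual_map (\<lambda>z. prec z y) a))"

definition tens2 :: "('m \<Rightarrow> 'k::field) \<Rightarrow> ('m \<Rightarrow> 'k) \<Rightarrow> ('m \<times> 'm \<Rightarrow> 'k)" where
  "tens2 u v = (\<lambda>(p, q). u p * v q)"
definition tens3 :: "('m \<Rightarrow> 'k::field) \<Rightarrow> ('m \<Rightarrow> 'k) \<Rightarrow> ('m \<Rightarrow> 'k) \<Rightarrow> ('m \<times> 'm \<times> 'm \<Rightarrow> 'k)" where
  "tens3 u v w = (\<lambda>(p, q, s). u p * v q * w s)"

definition tensor_of :: "'i set \<Rightarrow> ('i \<Rightarrow> 'm \<Rightarrow> 'k::field) \<Rightarrow> ('i \<Rightarrow> 'm \<Rightarrow> 'k) \<Rightarrow> ('m \<times> 'm \<Rightarrow> 'k)" where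
  "tensor_of I a b = (\<Sum>i\<in>I. tens2 (a i) (b i))"

definition flip2 :: "('m \<times> 'm \<Rightarrow> 'k) \<Rightarrow> ('m \<times> 'm \<Rightarrow> 'k)" where
  "flip2 t = (\<lambda>(p, q). t (q, p))"

definition PLYBE_P ::
  "(('m \<Rightarrow> 'k::field) \<Rightarrow> ('m \<Rightarrow> 'k) \<Rightarrow> ('m \<Rightarrow> 'k)) \<Rightarrow>
   'i set \<Rightarrow> ('i \<Rightarrow> 'm \<Rightarrow> 'k) \<Rightarrow> ('i \<Rightarrow> 'm \<Rightarrow> 'k) \<Rightarrow> ('m \<times> 'm \<times> 'm \<Rightarrow> 'k)" where
  "PLYBE_P circ I a b =
    (\<Sum>i\<in>I. \<Sum>j\<in>I.
       tens3 (a i) (a j) (circ (b i) (b j))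
     - tens3 (a i) (circ (b i) (a j)) (b j)
     + tens3 (circ (a i) (a j) - circ (a j) (a i)) (b j) (b i))"

definition PLYBE_L ::
  "(('m \<Rightarrow> 'k::field) \<Rightarrow> ('m \<Rightarrow> 'k) \<Rightarrow> ('m \<Rightarrow> 'k)) \<Rightarrow>
   'i set \<Rightarrow> ('i \<Rightarrow> 'm \<Rightarrow> 'k) \<Rightarrow> ('i \<Rightarrow> 'm \<Rightarrow> 'k) \<Rightarrow> ('m \<times> 'm \<times> 'm \<Rightarrow> 'k)" where
  "PLYBE_L br I a b =
    (\<Sum>i\<in>I. \<Sum>j\<in>I.
       tens3 (a i) (a j) (br (b i) (b j))
     + tens3 (a i) (br (b i) (a j)) (b j)
     - tens3 (br (a i) (a j) + br (a j) (a i)) (b i) (b j))"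

definition is_PLYBE_solution ::
  "(('m \<Rightarrow> 'k::field) \<Rightarrow> ('m \<Rightarrow> 'k) \<Rightarrow> ('m \<Rightarrow> 'k)) \<Rightarrow>
   (('m \<Rightarrow> 'k) \<Rightarrow> ('m \<Rightarrow> 'k) \<Rightarrow> ('m \<Rightarrow> 'k)) \<Rightarrow>
   'i set \<Rightarrow> ('i \<Rightarrow> 'm \<Rightarrow> 'k) \<Rightarrow> ('i \<Rightarrow> 'm \<Rightarrow> 'k) \<Rightarrow> bool" where
  "is_PLYBE_solution circ br I a b \<longleftrightarrow> PLYBE_P circ I a b = 0 \<and> PLYBE_L br I a b = 0"

text \<open>The family presenting r = sum_i (e_i (x) e_i^* + e_i^* (x) e_i), indexed by 'n + 'n.\<close>
definition r_left :: "('n \<Rightarrow> 'n \<Rightarrow> 'k::field) \<Rightarrow> ('n \<Rightarrow> 'n \<Rightarrow> 'k) \<Rightarrow> 'n + 'n \<Rightarrow> ('n + 'n \<Rightarrow> 'k)" where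
  "r_left e es = (\<lambda>p. case p of Inl i \<Rightarrow> inA (e i) | Inr i \<Rightarrow> inD (es i))"
definition r_right :: "('n \<Rightarrow> 'n \<Rightarrow> 'k::field) \<Rightarrow> ('n \<Rightarrow> 'n \<Rightarrow> 'k) \<Rightarrow> 'n + 'n \<Rightarrow> ('n + 'n \<Rightarrow> 'k)" where
  "r_right e es = (\<lambda>p. case p of Inl i \<Rightarrow> inD (es i) | Inr i \<Rightarrow> inA (e i))"

end

theory Submission
  imports Defs
begin

lemma sum_app: "(sum f A) x = sum (\<lambda>i. f i x) A"
  by (induct A rule: infinite_finite_induct) auto

lemma smul_app: "smul c v i = c * v i" by (simp add: smul_def)

lemma bil_zero1: assumes "bilinear_op f" shows "f 0 y = 0"
proof -
  have "f (0+0) y = f 0 y + f 0 y" using assms unfolding bilinear_op_def by blast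
  thus ?thesis by simp
qed
lemma bil_zero2: assumes "bilinear_op f" shows "f y 0 = 0"
proof -
  have "f y (0+0) = f y 0 + f y 0" using assms unfolding bilinear_op_def by blast
  thus ?thesis by simp
qed

lemma bil_sum1: assumes "bilinear_op f"
  shows "f (\<Sum>i\<in>I. smul (c i) (x i)) y = (\<Sum>i\<in>I. smul (c i) (f (x i) y))"
proof (induct I rule: infinite_finite_induct)
  case (infinite A) then show ?case using bil_zero1[OF assms, of y] by (metis sum.infinite)
next
  case empty then show ?case using bil_zero1[OF assms, of y] by (metis sum.empty)
next
  case (insert a A) then show ?case using assms unfolding bilinear_op_def by (simp del: plus_fun_apply zero_fun_apply)
qed

lemma bil_sum2: assumes "bilinear_op f"
  shows "f y (\<Sum>i\<in>I. smul (c i) (x i)) = (\<Sum>i\<in>I. smul (c i) (f y (x i)))"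
proof (induct I rule: infinite_finite_induct)
  case (infinite A) then show ?case using bil_zero2[OF assms, of y] by (metis sum.infinite)
next
  case empty then show ?case using bil_zero2[OF assms, of y] by (metis sum.empty)
next
  case (insert a A) then show ?case using assms unfolding bilinear_op_def by (simp del: plus_fun_apply zero_fun_apply)
qed

definition VV :: "'i set \<Rightarrow> ('i \<Rightarrow> 'm \<Rightarrow> 'k::field) \<Rightarrow> ('i \<Rightarrow> 'm \<Rightarrow> 'k) \<Rightarrow> 'm \<Rightarrow> ('m \<Rightarrow> 'k)" where
  "VV I a b x = (\<Sum>i\<in>I. smul (a i x) (b i))"

lemma P_red: assumes "bilinear_op f"
  shows "PLYBE_P f I a b (p,q,s) = f (VV I a b p) (VV I a b q) s - f (VV I a b p) (VV I b a s) q
     + f (VV I b a s) (VV I b a q) p - f (VV I b a q) (VV I b a s) p"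
  unfolding VV_def bil_sum1[OF assms] bil_sum2[OF assms]
  apply (simp add: PLYBE_P_def sum_app smul_app tens3_def sum_subtractf sum.distrib sum_distrib_left sum_distrib_right
     algebra_simps)
  apply (rule arg_cong2[where f="(+)"])
   apply (rule sum.swap)
  apply (rule arg_cong2[where f="(+)"])
   apply (subst sum.swap, simp add: mult_ac)
  apply (subst sum.swap, simp add: mult_ac)
  done

lemma L_red: assumes "bilinear_op f"
  shows "PLYBE_L f I a b (p,q,s) = f (VV I a b p) (VV I a b q) s + f (VV I a b p) (VV I b a s) q
     - f (VV I b a q) (VV I b a s) p - f (VV I b a s) (VV I b a q) p"
  unfolding VV_def bil_sum1[OF assms] bil_sum2[OF assms]
  apply (simp add: PLYBE_L_def sum_app smul_app tens3_def sum_subtractf sum.distrib sum_distrib_left sum_distrib_right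
     algebra_simps)
  apply (rule trans[OF _ add.left_commute])
  apply (rule arg_cong2[where f="(+)"])
   apply (subst sum.swap, simp add: mult_ac)
  apply (rule arg_cong2[where f="(+)"])
   apply (subst sum.swap, simp add: mult_ac)
  apply (subst sum.swap, simp add: mult_ac)
  done

lemma prA_add: "prA (v + w) = prA v + prA w" by (simp add: prA_def fun_eq_iff)
lemma prD_add: "prD (v + w) = prD v + prD w" by (simp add: prD_def fun_eq_iff)
lemma prA_smul: "prA (smul c v) = smul c (prA v)" by (simp add: prA_def smul_def)
lemma prD_smul: "prD (smul c v) = smul c (prD v)" by (simp add: prD_def smul_def)
lemma inA_add: "inA (x + y) = inA x + inA y" by (simp add: inA_def fun_eq_iff split: sum.split)
lemma inD_add: "inD (x + y) = inD x + inD y" by (simp add: inD_def fun_eq_iff split: sum.split)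
lemma inA_smul: "inA (smul c x) = smul c (inA x)" by (simp add: inA_def smul_def fun_eq_iff split: sum.split)
lemma inD_smul: "inD (smul c x) = smul c (inD x)" by (simp add: inD_def smul_def fun_eq_iff split: sum.split)
lemma inD_diff: "inD (x - y) = inD x - inD y" by (simp add: inD_def fun_eq_iff split: sum.split)
lemma inD_uminus: "inD (- x) = - inD x" by (simp add: inD_def fun_eq_iff split: sum.split)
lemma smul_add: "smul c (x + y) = smul c x + smul c y" by (simp add: smul_def fun_eq_iff algebra_simps)
lemma smul_diff: "smul c (x - y) = smul c x - smul c y" by (simp add: smul_def fun_eq_iff algebra_simps)
lemma smul_uminus: "smul c (- x) = - smul c x" by (simp add: smul_def fun_eq_iff algebra_simps)
lemma dm_add: "dual_map \<phi> (a + b) = dual_map \<phi> a + dual_map \<phi> b"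
  by (simp add: dual_map_def pairing_def fun_eq_iff sum.distrib algebra_simps)
lemma dm_smul: "dual_map \<phi> (smul c a) = smul c (dual_map \<phi> a)"
  by (simp add: dual_map_def pairing_def fun_eq_iff smul_def sum_distrib_left algebra_simps)
lemma dm_addf: "dual_map (\<lambda>z. \<phi> z + \<psi> z) a = dual_map \<phi> a + dual_map \<psi> a"
  by (simp add: dual_map_def pairing_def fun_eq_iff sum.distrib algebra_simps)
lemma dm_smulf: "dual_map (\<lambda>z. smul c (\<phi> z)) a = smul c (dual_map \<phi> a)"
  by (simp add: dual_map_def pairing_def fun_eq_iff smul_def sum_distrib_left algebra_simps)

lemma bil_rules: assumes "bilinear_op f"
  shows "f (x + y) z = f x z + f y z" "f x (y + z) = f x y + f x z"
    "f (smul c x) y = smul c (f x y)" "f x (smul c y) = smul c (f x y)"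
  using assms unfolding bilinear_op_def by blast+

lemma bil_fun: assumes "bilinear_op f"
  shows "f (x + y) = (\<lambda>z. f x z + f y z)" "f (smul c x) = (\<lambda>z. smul c (f x z))"
  using bil_rules[OF assms] by auto

lemma hat_circ_bil: assumes "bilinear_op rhd" "bilinear_op lhd"
  shows "bilinear_op (hat_circ rhd lhd)"
  unfolding bilinear_op_def hat_circ_def Let_def
  apply (simp only: prA_add prD_add prA_smul prD_smul bil_rules[OF assms(1)] bil_rules[OF assms(2)] bil_fun[OF assms(1)]
     dm_add dm_smul dm_addf dm_smulf inA_add inD_add inA_smul inD_smul inD_diff inD_uminus smul_add smul_diff smul_uminus)
  apply (simp add: algebra_simps)
  done

lemma hat_br_bil: assumes "bilinear_op succ" "bilinear_op prec"
  shows "bilinear_op (hat_br succ prec)"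
  unfolding bilinear_op_def hat_br_def Let_def
  apply (simp only: prA_add prD_add prA_smul prD_smul bil_rules[OF assms(1)] bil_rules[OF assms(2)] bil_fun[OF assms(1)]
     dm_add dm_smul dm_addf dm_smulf inA_add inD_add inA_smul inD_smul inD_diff inD_uminus smul_add smul_diff smul_uminus)
  apply (simp add: algebra_simps)
  done

lemma pairing_sum: "pairing a (\<Sum>i\<in>I. smul (c i) (x i)) = (\<Sum>i\<in>I. c i * pairing a (x i))"
  unfolding pairing_def sum_app smul_app
  by (simp add: sum_distrib_left algebra_simps sum.swap[of _ UNIV])

lemma mult_ite: "(a::'k::field) * (if P then 1 else 0) = (if P then a else 0)" by simp

lemma dual_basis:
  assumes "is_basis e" and "\<forall>i j. pairing (es i) (e j) = (if i = j then 1 else (0::'k::field))"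
  shows "(\<Sum>i\<in>UNIV. e i p * es i q) = (if p = q then 1 else 0)"
proof -
  obtain c where c: "unitv q = (\<Sum>i\<in>UNIV. smul (c i) (e i))"
    using assms(1) unfolding is_basis_def by blast
  have cj: "c j = es j q" for j
  proof -
    have eqf: "(\<lambda>i. es j i * (if i = q then 1 else 0)) = (\<lambda>i. if i = q then es j i else 0)" by auto
    have "pairing (es j) (unitv q) = es j q"
      unfolding pairing_def unitv_def by (subst eqf) simp
    moreover have "pairing (es j) (unitv q) = c j"
      unfolding c pairing_sum using assms(2) by (simp add: mult_ite)
    ultimately show ?thesis by simp
  qed
  have "unitv q p = (\<Sum>i\<in>UNIV. c i * e i p)"
    by (subst c) (simp add: sum_app smul_app)
  thus ?thesis by (simp add: cj unitv_def mult.commute eq_commute)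
qed

definition sw :: "'n + 'n \<Rightarrow> 'n + 'n" where
  "sw x = (case x of Inl i \<Rightarrow> Inr i | Inr i \<Rightarrow> Inl i)"

lemma sum_UNIV_Plus: "sum g (UNIV :: ('a::finite + 'b::finite) set) = sum (\<lambda>i. g (Inl i)) UNIV + sum (\<lambda>i. g (Inr i)) UNIV"
  by (subst UNIV_Plus_UNIV[symmetric], subst sum.Plus) (auto simp: comp_def)

lemma VV_r:
  assumes "is_basis e" and "\<forall>i j. pairing (es i) (e j) = (if i = j then 1 else (0::'k::field))"
  shows "VV UNIV (r_left e es) (r_right e es) x = unitv (sw x)"
    "VV UNIV (r_right e es) (r_left e es) x = unitv (sw x)"
proof -
  note K = dual_basis[OF assms]
  show "VV UNIV (r_left e es) (r_right e es) x = unitv (sw x)"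
  proof
    fix y show "VV UNIV (r_left e es) (r_right e es) x y = unitv (sw x) y"
      using K by (cases x; cases y) (auto simp: VV_def sum_app smul_app sum_UNIV_Plus r_left_def r_right_def inA_def inD_def
     unitv_def sw_def mult.commute)
  qed
  show "VV UNIV (r_right e es) (r_left e es) x = unitv (sw x)"
  proof
    fix y show "VV UNIV (r_right e es) (r_left e es) x y = unitv (sw x) y"
      using K by (cases x; cases y) (auto simp: VV_def sum_app smul_app sum_UNIV_Plus r_left_def r_right_def inA_def inD_def
     unitv_def sw_def mult.commute)
  qed
qed

lemma prA_inA[simp]: "prA (inA x) = x" by (simp add: prA_def inA_def)
lemma prD_inA[simp]: "prD (inA x) = 0" by (simp add: prD_def inA_def fun_eq_iff)
lemma prA_inD[simp]: "prA (inD x) = 0" by (simp add: prA_def inD_def fun_eq_iff)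
lemma prD_inD[simp]: "prD (inD x) = x" by (simp add: prD_def inD_def)
lemma inA_app[simp]: "inA x (Inl i) = x i" "inA x (Inr i) = 0" by (simp_all add: inA_def)
lemma inD_app[simp]: "inD x (Inl i) = 0" "inD x (Inr i) = x i" by (simp_all add: inD_def)
lemma dm_zero[simp]: "dual_map \<phi> 0 = 0" by (simp add: dual_map_def pairing_def fun_eq_iff)
lemma dm_unit[simp]: "dual_map \<phi> (unitv k) j = - \<phi> (unitv j) k"
proof -
  have eqf: "(\<lambda>i. unitv k i * \<phi> (unitv j) i) = (\<lambda>i. if i = k then \<phi> (unitv j) i else 0)" by (auto simp: unitv_def)
  show ?thesis unfolding dual_map_def pairing_def by (subst eqf) simp
qed
lemma dm_zerof[simp]: "dual_map (\<lambda>z. 0) a = 0" by (simp add: dual_map_def pairing_def fun_eq_iff)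
lemma unitv_sum[simp]: "(unitv (Inl i) :: 'n + 'n \<Rightarrow> 'k::field) = inA (unitv i)" "(unitv (Inr i) :: 'n + 'n \<Rightarrow> 'k::field) = inD (unitv i)"
  by (auto simp: fun_eq_iff unitv_def inA_def inD_def split: sum.split)
lemma sw_simps[simp]: "sw (Inl i) = Inr i" "sw (Inr i) = Inl i" by (simp_all add: sw_def)

theorem corollary3p31:
  fixes rhd lhd succ prec :: "('n::finite \<Rightarrow> 'k::field_char_0) \<Rightarrow> ('n \<Rightarrow> 'k) \<Rightarrow> ('n \<Rightarrow> 'k)"
    and e es :: "'n \<Rightarrow> 'n \<Rightarrow> 'k"
  assumes "pre_dual_pre_Poisson rhd lhd succ prec"
    and "is_basis e"
    and "\<forall>i j. pairing (es i) (e j) = (if i = j then 1 else 0)"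
  shows "is_PLYBE_solution (hat_circ rhd lhd) (hat_br succ prec) UNIV (r_left e es) (r_right e es)
       \<and> flip2 (tensor_of UNIV (r_left e es) (r_right e es)) = tensor_of UNIV (r_left e es) (r_right e es)"
proof -
  have b: "bilinear_op rhd" "bilinear_op lhd" "bilinear_op succ" "bilinear_op prec"
    using assms(1) unfolding pre_dual_pre_Poisson_def by auto
  note z = bil_zero1[OF b(1)] bil_zero2[OF b(1)] bil_zero1[OF b(2)] bil_zero2[OF b(2)]
     bil_zero1[OF b(3)] bil_zero2[OF b(3)] bil_zero1[OF b(4)] bil_zero2[OF b(4)]
  have zf: "rhd 0 = (\<lambda>z. 0)" "succ 0 = (\<lambda>z. 0)" "lhd 0 = (\<lambda>z. 0)" "prec 0 = (\<lambda>z. 0)" using z by auto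
  note V = VV_r[OF assms(2,3)]
  have P: "PLYBE_P (hat_circ rhd lhd) UNIV (r_left e es) (r_right e es) = 0"
  proof
    fix t :: "('n + 'n) \<times> ('n + 'n) \<times> ('n + 'n)"
    obtain p q s where t: "t = (p, q, s)" by (cases t) auto
    show "PLYBE_P (hat_circ rhd lhd) UNIV (r_left e es) (r_right e es) t = 0 t"
      unfolding t P_red[OF hat_circ_bil[OF b(1,2)]] V
      by (cases p; cases q; cases s) (simp_all add: hat_circ_def Let_def z zf)
  qed
  have L: "PLYBE_L (hat_br succ prec) UNIV (r_left e es) (r_right e es) = 0"
  proof
    fix t :: "('n + 'n) \<times> ('n + 'n) \<times> ('n + 'n)"
    obtain p q s where t: "t = (p, q, s)" by (cases t) auto
    show "PLYBE_L (hat_br succ prec) UNIV (r_left e es) (r_right e es) t = 0 t"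
      unfolding t L_red[OF hat_br_bil[OF b(3,4)]] V
      by (cases p; cases q; cases s) (simp_all add: hat_br_def Let_def z zf)
  qed
  have T: "tensor_of UNIV (r_left e es) (r_right e es) (p, q) = unitv (sw p) q" for p q
    using V(1)[of p] unfolding tensor_of_def VV_def
    by (simp add: sum_app smul_app tens2_def fun_eq_iff)
  have F: "flip2 (tensor_of UNIV (r_left e es) (r_right e es)) = tensor_of UNIV (r_left e es) (r_right e es)"
  proof
    fix t :: "('n + 'n) \<times> ('n + 'n)"
    obtain p q where t: "t = (p, q)" by (cases t) auto
    show "flip2 (tensor_of UNIV (r_left e es) (r_right e es)) t = tensor_of UNIV (r_left e es) (r_right e es) t"
      unfolding t flip2_def by (simp add: T) (cases p; cases q; simp add: unitv_def)
  qed
  show ?thesis using P L F unfolding is_PLYBE_solution_def by simp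
qed

end
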